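(* Consider metrics on the four-sphere of the form $$ds^2=dr^2+\frac{f(r)^2}{4}(d\theta^2+\sin^2\theta\,d\phi^2)+\frac{g(r)^2}{4}(d\psi+\cos\theta\,d\phi)^2,$$ $0\le r\le\pi$, $0\le\theta\le\pi$, $0\le\phi\le 2\pi$, $0\le\psi\le4\pi$, with $f,g$ smooth, and the system of ordinary differential equations $$\frac{f''}{f}=\frac{f'g'}{fg}-\frac{g^2}{f^4},\qquad \frac{g''}{g}=\frac{f'^2-4}{f^2}+\frac{3g^2}{f^4},$$ which is satisfied by the round four-sphere $f(r)=g(r)=\sin r$ and whose solutions give Einstein metrics of this form. Substitute $f(r)=\sin r+\epsilon p(r)$, $g(r)=\sin r+\epsilon q(r)$ and keep terms of first order in $\epsilon$, obtaining the linearized system $$p''-q=(p'+q')\cot r+\frac{3}{\sin^2 r}(p-q),\qquad q''+q-2p=2p'\cot r-\frac{6}{\sin^2 r}(p-q).$$ Then the pairs $(p,q)$ of smooth (in particular finite) real functions on $[0,\pi]$ solving this linearized system are exactly $$p(r)=q(r)=c_1\cos r+c_2(\sin r-r\cos r),\qquad c_1,c_2\in\mathbb{R}.$$ Moreover, for every such solution, the metric with $f=g=\sin r+\epsilon p$ has Riemann curvature tensor (in the orthonormal frame $e^1=\tfrac f2 d\theta$, $e^2=\tfrac f2\sin\theta\,d\phi$, $e^3=\tfrac g2(d\psi+\cos\theta\,d\phi)$, $e^4=dr$) $$R_{abcd}=(1-2\epsilon c_2)(\delta_{ac}\delta_{bd}-\delta_{ad}\delta_{bc})+O(\epsilon^2),$$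 i.e. to first order in $\epsilon$ it is a conformally flat Einstein metric of constant sectional curvature $1-2\epsilon c_2$, so the deformation changes at most the size of the sphere.
   Context: An Einstein metric is one whose Ricci tensor is a constant multiple of the metric. The round unit four-sphere corresponds to $f=g=\sin r$ and has constant sectional curvature $1$. *)

theory Defs
  imports "HOL-Analysis.Analysis" "HOL-Library.Landau_Symbols"
begin

definition smooth_on_closed :: "real \<Rightarrow> real \<Rightarrow> (real \<Rightarrow> real) \<Rightarrow> bool" where
  "smooth_on_closed a b p \<longleftrightarrow>
     (\<exists>D :: nat \<Rightarrow> real \<Rightarrow> real. (\<forall>x\<in>{a..b}. D 0 x = p x) \<and>
        (\<forall>n. \<forall>x\<in>{a..b}. (D n has_real_derivative D (Suc n) x) (at x within {a..b})))"

text \<open>Points of the chart are coordinate tuples x :: nat => real (only x 0 .. x 3 are used).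
  A metric is given by its component functions G x i j (i, j < 4).\<close>

definition cpd :: "nat \<Rightarrow> ((nat \<Rightarrow> real) \<Rightarrow> real) \<Rightarrow> (nat \<Rightarrow> real) \<Rightarrow> real" where
  "cpd i F x = deriv (\<lambda>t. F (x(i := t))) (x i)"

definition ginv :: "((nat \<Rightarrow> real) \<Rightarrow> nat \<Rightarrow> nat \<Rightarrow> real) \<Rightarrow> (nat \<Rightarrow> real) \<Rightarrow> nat \<Rightarrow> nat \<Rightarrow> real" where
  "ginv G x = (THE H. (\<forall>i<4. \<forall>k<4. (\<Sum>j<4. G x i j * H j k) = (if i = k then 1 else 0)) \<and>
                     (\<forall>i j. (4 \<le> i \<or> 4 \<le> j) \<longrightarrow> H i j = 0))"

definition christoffel :: "((nat \<Rightarrow> real) \<Rightarrow> nat \<Rightarrow> nat \<Rightarrow> real) \<Rightarrow> (nat \<Rightarrow> real) \<Rightarrow> nat \<Rightarrow> nat \<Rightarrow> nat \<Rightarrow> real" where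
  "christoffel G x i k l = (1/2) * (\<Sum>m<4. ginv G x i m *
      (cpd k (\<lambda>y. G y m l) x + cpd l (\<lambda>y. G y m k) x - cpd m (\<lambda>y. G y k l) x))"

definition riemann_up :: "((nat \<Rightarrow> real) \<Rightarrow> nat \<Rightarrow> nat \<Rightarrow> real) \<Rightarrow> (nat \<Rightarrow> real) \<Rightarrow> nat \<Rightarrow> nat \<Rightarrow> nat \<Rightarrow> nat \<Rightarrow> real" where
  "riemann_up G x i j k l =
     cpd k (\<lambda>y. christoffel G y i l j) x - cpd l (\<lambda>y. christoffel G y i k j) x +
     (\<Sum>m<4. christoffel G x i k m * christoffel G x m l j - christoffel G x i l m * christoffel G x m k j)"

text \<open>Fully covariant Riemann tensor R_{ijkl} = g_{im} R^m_{jkl}; with this convention a space of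
  constant sectional curvature K has R_{ijkl} = K (g_{ik} g_{jl} - g_{il} g_{jk}).\<close>
definition riemann :: "((nat \<Rightarrow> real) \<Rightarrow> nat \<Rightarrow> nat \<Rightarrow> real) \<Rightarrow> (nat \<Rightarrow> real) \<Rightarrow> nat \<Rightarrow> nat \<Rightarrow> nat \<Rightarrow> nat \<Rightarrow> real" where
  "riemann G x i j k l = (\<Sum>m<4. G x i m * riemann_up G x m j k l)"

text \<open>Components of the Riemann tensor in a frame E (E x a i = i-th coordinate component of
  the frame vector e_a at x).\<close>
definition frame_riemann ::
  "((nat \<Rightarrow> real) \<Rightarrow> nat \<Rightarrow> nat \<Rightarrow> real) \<Rightarrow> ((nat \<Rightarrow> real) \<Rightarrow> nat \<Rightarrow> nat \<Rightarrow> real) \<Rightarrow> (nat \<Rightarrow> real) \<Rightarrow> nat \<Rightarrow> nat \<Rightarrow> nat \<Rightarrow> nat \<Rightarrow> real" where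
  "frame_riemann G E x a b c d =
     (\<Sum>i<4. \<Sum>j<4. \<Sum>k<4. \<Sum>l<4. riemann G x i j k l * E x a i * E x b j * E x c k * E x d l)"

text \<open>Coordinates: x 0 = r, x 1 = theta, x 2 = phi, x 3 = psi.
  Frame indices: 0,1,2,3 correspond to the paper's e^1, e^2, e^3, e^4
  (e^1 = f/2 dtheta, e^2 = f/2 sin theta dphi, e^3 = g/2 (dpsi + cos theta dphi), e^4 = dr).
  coframe f g x a i = i-th coordinate component of the 1-form e^a.\<close>
definition coframe :: "(real \<Rightarrow> real) \<Rightarrow> (real \<Rightarrow> real) \<Rightarrow> (nat \<Rightarrow> real) \<Rightarrow> nat \<Rightarrow> nat \<Rightarrow> real" where
  "coframe f g x a i =
     (if a = 0 \<and> i = 1 then f (x 0) / 2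
      else if a = 1 \<and> i = 2 then f (x 0) / 2 * sin (x 1)
      else if a = 2 \<and> i = 3 then g (x 0) / 2
      else if a = 2 \<and> i = 2 then g (x 0) / 2 * cos (x 1)
      else if a = 3 \<and> i = 0 then 1
      else 0)"

definition s4_metric :: "(real \<Rightarrow> real) \<Rightarrow> (real \<Rightarrow> real) \<Rightarrow> (nat \<Rightarrow> real) \<Rightarrow> nat \<Rightarrow> nat \<Rightarrow> real" where
  "s4_metric f g x i j = (\<Sum>a<4. coframe f g x a i * coframe f g x a j)"

text \<open>The dual orthonormal frame: e_1 = (2/f) d_theta, e_2 = (2/(f sin theta))(d_phi - cos theta d_psi),
  e_3 = (2/g) d_psi, e_4 = d_r.  frame f g x a i = i-th coordinate component of e_a.\<close>
definition s4_frame :: "(real \<Rightarrow> real) \<Rightarrow> (real \<Rightarrow> real) \<Rightarrow> (nat \<Rightarrow> real) \<Rightarrow> nat \<Rightarrow> nat \<Rightarrow> real" where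
  "s4_frame f g x a i =
     (if a = 0 \<and> i = 1 then 2 / f (x 0)
      else if a = 1 \<and> i = 2 then 2 / (f (x 0) * sin (x 1))
      else if a = 1 \<and> i = 3 then - 2 * cos (x 1) / (f (x 0) * sin (x 1))
      else if a = 2 \<and> i = 3 then 2 / g (x 0)
      else if a = 3 \<and> i = 0 then 1
      else 0)"

end

theory Submission
  imports Defs
begin


lemma sum4: "(\<Sum>a<(4::nat). f a) = f 0 + f 1 + f 2 + (f 3 :: real)"
  by (simp add: eval_nat_numeral)

definition g0 :: "nat \<Rightarrow> nat \<Rightarrow> real" where "g0 k l = (if (k=1\<and>l=1)\<or>(k=2\<and>l=2)\<or>(k=3\<and>l=3) then 1 else 0)"
definition g1 :: "nat \<Rightarrow> nat \<Rightarrow> real" where "g1 k l = (if (k=2\<and>l=3)\<or>(k=3\<and>l=2) then 1 else 0)"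
definition d00 :: "nat \<Rightarrow> nat \<Rightarrow> real" where "d00 i j = (if i=0\<and>j=0 then 1 else 0)"
definition ghat :: "real \<Rightarrow> nat \<Rightarrow> nat \<Rightarrow> real" where "ghat th k l = g0 k l + cos th * g1 k l"
definition gm :: "real \<Rightarrow> real \<Rightarrow> nat \<Rightarrow> nat \<Rightarrow> real" where "gm f th i j = d00 i j + f^2/4 * ghat th i j"
definition gi :: "real \<Rightarrow> real \<Rightarrow> nat \<Rightarrow> nat \<Rightarrow> real" where "gi f th i j = d00 i j + 4/f^2 * ((if i=1\<and>j=1 then 1 else 0)
    + 1/(sin th)^2 * ((if (i=2\<and>j=2)\<or>(i=3\<and>j=3) then 1 else 0) - cos th * g1 i j))"
definition h1 :: "nat \<Rightarrow> nat \<Rightarrow> nat \<Rightarrow> real" where "h1 i k l = (if i=1 \<and> ((k=2\<and>l=3)\<or>(k=3\<and>l=2)) then 1 else 0)"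
definition h2 :: "nat \<Rightarrow> nat \<Rightarrow> nat \<Rightarrow> real" where "h2 i k l = (if (i=2 \<and> ((k=1\<and>l=3)\<or>(k=3\<and>l=1))) \<or> (i=3 \<and> ((k=1\<and>l=2)\<or>(k=2\<and>l=1))) then -1 else 0)"
definition h3 :: "nat \<Rightarrow> nat \<Rightarrow> nat \<Rightarrow> real" where "h3 i k l = (if (i=2 \<and> ((k=1\<and>l=2)\<or>(k=2\<and>l=1))) \<or> (i=3 \<and> ((k=1\<and>l=3)\<or>(k=3\<and>l=1))) then 1 else 0)"
definition cB :: "nat \<Rightarrow> nat \<Rightarrow> nat \<Rightarrow> real" where "cB i k l = (if i \<noteq> 0 \<and> ((k=0 \<and> l=i) \<or> (l=0 \<and> k=i)) then 1 else 0)"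
definition e0 :: "nat \<Rightarrow> real" where "e0 i = (if i = 0 then 1 else 0)"
definition Gam :: "real \<Rightarrow> real \<Rightarrow> real \<Rightarrow> nat \<Rightarrow> nat \<Rightarrow> nat \<Rightarrow> real" where
  "Gam f f1 th i k l = -(f * f1)/4 * e0 i * ghat th k l + f1/f * cB i k l
   + sin th/2 * h1 i k l + 1/(2 * sin th) * h2 i k l + cos th/(2 * sin th) * h3 i k l"
definition dG :: "nat \<Rightarrow> real \<Rightarrow> real \<Rightarrow> real \<Rightarrow> nat \<Rightarrow> nat \<Rightarrow> real" where
  "dG k f f1 th m l = (if k = 0 then f * f1/2 * ghat th m l
    else if k = 1 then - (f^2/4) * sin th * g1 m l else 0)"

lemma chr_alg:
  assumes "f \<noteq> 0" "sin th \<noteq> 0" "i < 4" "k < 4" "l < 4"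
  shows "(1/2) * (\<Sum>m<4. gi f th i m * (dG k f f1 th m l + dG l f f1 th m k - dG m f f1 th k l))
     = Gam f f1 th i k l"
proof -
  have s: "(sin th)^2 = 1 - (cos th)^2" by (simp add: sin_squared_eq)
  have s2: "1 - (cos th)^2 \<noteq> 0" using assms(2) by (simp add: s[symmetric])
  have ss: "sin th * sin th = 1 - cos th * cos th" using s by (simp add: power2_eq_square)
  have cc: "\<And>x. cos th * (cos th * x) = x - sin th * (sin th * x)" by (metis ss diff_add_cancel distrib_right mult.assoc mult_1 add_diff_cancel_left')
  from assms(3,4,5) show ?thesis
    unfolding sum4 gi_def dG_def Gam_def ghat_def g0_def g1_def d00_def h1_def h2_def h3_def cB_def e0_def
    apply (simp add: less_Suc_eq numeral_eq_Suc)
    apply (elim disjE)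
    apply (simp_all add: s field_simps s2 assms)
    apply (simp_all add: cc algebra_simps)
    done
qed




lemma metric_eq: "s4_metric F F y i j = gm (F (y 0)) (y 1) i j"
proof -
  have ss: "a * sin t * (a * sin t) + a * cos t * (a * cos t) = a * a" for a t :: real
  proof -
    have "a * sin t * (a * sin t) + a * cos t * (a * cos t) = a * a * (cos t * cos t + sin t * sin t)"
      by (simp only: distrib_left mult_ac)
    thus ?thesis by (simp only: sin_cos_squared_add3 mult_1_right)
  qed
  have big: "\<And>a i. 4 \<le> i \<Longrightarrow> coframe F F y a i = 0" by (simp add: coframe_def)
  have ci: "i = 0 \<or> i = 1 \<or> i = 2 \<or> i = 3 \<or> i \<ge> 4" by auto
  have cj: "j = 0 \<or> j = 1 \<or> j = 2 \<or> j = 3 \<or> j \<ge> 4" by auto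
  show ?thesis using ci cj
  apply (elim disjE)
  apply (simp_all add: s4_metric_def big)
  apply (simp_all add: gm_def d00_def ghat_def g0_def g1_def)
  apply (simp_all add: coframe_def sum4 power2_eq_square ss)
  done
qed

lemma solve2:
  fixes f s c a b u v :: real
  assumes "f \<noteq> 0" "s \<noteq> 0" "s^2 = 1 - c^2" "f^2/4*(a + c* b) = u" "f^2/4*(c* a + b) = v"
  shows "a = 4/f^2 * (1/s^2 * (u - c* v))" "b = 4/f^2 * (1/s^2 * (v - c* u))"
proof -
  have "f^2/4 * a * (1 - c^2) = f^2/4*(a + c * b) - c * (f^2/4*(c * a + b))" by (simp add: field_simps power2_eq_square)
  hence ea: "f^2/4 * a * s^2 = u - c * v" using assms by simp
  thus "a = 4/f^2 * (1/s^2 * (u - c* v))" using assms(1,2) by (simp add: field_simps)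
  have "f^2/4 * b * (1 - c^2) = f^2/4*(c * a + b) - c * (f^2/4*(a + c * b))" by (simp add: field_simps power2_eq_square)
  hence "f^2/4 * b * s^2 = v - c * u" using assms by simp
  thus "b = 4/f^2 * (1/s^2 * (v - c* u))" using assms(1,2) by (simp add: field_simps)
qed

lemma ginv_eq:
  assumes G: "\<And>i j. G y i j = gm f th i j" and f: "f \<noteq> 0" and s: "sin th \<noteq> 0"
  shows "ginv G y = gi f th"
proof -
  have sq: "(sin th)^2 = 1 - (cos th)^2" by (simp add: sin_squared_eq)
  have s2: "1 - (cos th)^2 \<noteq> 0" using s by (simp add: sq[symmetric])
  have ss: "sin th * sin th = 1 - cos th * cos th" using sq by (simp add: power2_eq_square)
  have r: "1 + cos th * cos th/(sin th * sin th) = 1/(sin th * sin th)"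
  proof -
    have "1 + cos th * cos th/(sin th * sin th) = (cos th * cos th + sin th * sin th)/(sin th * sin th)"
      using s by (simp add: field_simps)
    then show ?thesis by simp
  qed
  have P: "(\<forall>i<4. \<forall>k<4. (\<Sum>j<4. G y i j * gi f th j k) = (if i = k then 1 else 0)) \<and>
                     (\<forall>i j. (4 \<le> i \<or> 4 \<le> j) \<longrightarrow> gi f th i j = 0)"
  proof (intro conjI allI impI)
    fix i k :: nat assume "i < 4" "k < 4"
    then show "(\<Sum>j<4. G y i j * gi f th j k) = (if i = k then 1 else 0)"
      unfolding G sum4 gi_def gm_def ghat_def g0_def g1_def d00_def
      apply (simp add: less_Suc_eq numeral_eq_Suc)
      apply (elim disjE)
      apply (simp_all add: sq field_simps s2 f)
      apply (rule r[symmetric])+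
      done
  next
    fix i j :: nat assume "4 \<le> i \<or> 4 \<le> j"
    then show "gi f th i j = 0" unfolding gi_def g1_def d00_def by auto
  qed
  show ?thesis unfolding ginv_def
  proof (rule the_equality)
    show "(\<forall>i<4. \<forall>k<4. (\<Sum>j<4. G y i j * gi f th j k) = (if i = k then 1 else 0)) \<and>
                     (\<forall>i j. (4 \<le> i \<or> 4 \<le> j) \<longrightarrow> gi f th i j = 0)" by (rule P)
  next
    fix H assume H: "(\<forall>i<4. \<forall>k<4. (\<Sum>j<4. G y i j * H j k) = (if i = k then 1 else 0)) \<and>
                     (\<forall>i j. (4 \<le> i \<or> 4 \<le> j) \<longrightarrow> H i j = (0::real))"
    show "H = gi f th"
    proof (intro ext)
      fix i k :: nat
      show "H i k = gi f th i k"
      proof (cases "i < 4 \<and> k < 4")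
        case False
        hence "4 \<le> i \<or> 4 \<le> k" by auto
        hence "H i k = 0" "gi f th i k = 0" using H P by blast+
        then show ?thesis by simp
      next
        case True
        have E: "(\<Sum>j<4. gm f th i j * H j k) = (if i = k then 1 else 0)" if "i < 4" for i
        proof -
          have "(\<Sum>j<4. G y i j * H j k) = (if i = k then 1 else 0)" using H that True by blast
          then show ?thesis by (simp only: G)
        qed
        have e0: "H 0 k = (if 0 = k then 1 else 0)" using E[of 0]
          unfolding sum4 gm_def ghat_def g0_def g1_def d00_def by simp
        have e1: "f^2/4 * H 1 k = (if 1 = k then 1 else 0)" using E[of 1]
          unfolding sum4 gm_def ghat_def g0_def g1_def d00_def by simp
        have e2: "f^2/4 * (H 2 k + cos th * H 3 k) = (if 2 = k then 1 else 0)" using E[of 2]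
          unfolding sum4 gm_def ghat_def g0_def g1_def d00_def by (simp add: algebra_simps)
        have e3: "f^2/4 * (cos th * H 2 k + H 3 k) = (if 3 = k then 1 else 0)" using E[of 3]
          unfolding sum4 gm_def ghat_def g0_def g1_def d00_def by (simp add: algebra_simps)
        note r = solve2[OF f s sq e2 e3]
        have h1: "H 1 k = 4/f^2 * (if 1 = k then 1 else 0)" using e1 f by (simp add: field_simps)
        have ik: "(i = 0 \<or> i = 1 \<or> i = 2 \<or> i = 3) \<and> (k = 0 \<or> k = 1 \<or> k = 2 \<or> k = 3)"
          using True by auto
        show ?thesis using ik e0 h1 r
          unfolding gi_def g1_def d00_def
          apply (elim conjE disjE)
          apply simp_all
          done
      qed
    qed
  qed
qed




lemma cpd0: "cpd 0 (\<lambda>y. H (y 0) (y 1)) x = deriv (\<lambda>t. H t (x 1)) (x 0)"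
  by (simp add: cpd_def)
lemma cpd1: "cpd 1 (\<lambda>y. H (y 0) (y 1)) x = deriv (\<lambda>t. H (x 0) t) (x 1)"
  by (simp add: cpd_def)
lemma cpdk: "k \<noteq> 0 \<Longrightarrow> k \<noteq> 1 \<Longrightarrow> cpd k (\<lambda>y. H (y 0) (y 1)) x = 0"
  by (simp add: cpd_def)

lemma cpd_metric:
  assumes F1: "\<And>t. (F has_real_derivative F1 t) (at t)"
  shows "cpd k (\<lambda>y. s4_metric F F y m l) x = dG k (F (x 0)) (F1 (x 0)) (x 1) m l"
proof -
  have "cpd k (\<lambda>y. s4_metric F F y m l) x = cpd k (\<lambda>y. gm (F (y 0)) (y 1) m l) x"
    by (simp add: metric_eq)
  also have "\<dots> = dG k (F (x 0)) (F1 (x 0)) (x 1) m l"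
  proof -
    consider "k = 0" | "k = 1" | "k \<noteq> 0 \<and> k \<noteq> 1" by blast
    then show ?thesis
    proof cases
      case 1
      have "((\<lambda>t. gm (F t) (x 1) m l) has_real_derivative dG k (F (x 0)) (F1 (x 0)) (x 1) m l) (at (x 0))"
        unfolding gm_def dG_def using 1
        by (auto intro!: derivative_eq_intros F1 simp: power2_eq_square)
      then show ?thesis using 1 cpd0[where H="\<lambda>a b. gm (F a) b m l"] by (simp add: DERIV_imp_deriv)
    next
      case 2
      have "((\<lambda>t. gm (F (x 0)) t m l) has_real_derivative dG k (F (x 0)) (F1 (x 0)) (x 1) m l) (at (x 1))"
        unfolding gm_def dG_def ghat_def using 2
        by (auto intro!: derivative_eq_intros simp: power2_eq_square)
      then show ?thesis using 2 cpd1[where H="\<lambda>a b. gm (F a) b m l"] by (simp add: DERIV_imp_deriv)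
    next
      case 3
      then show ?thesis using cpdk[where H="\<lambda>a b. gm (F a) b m l"] by (simp add: dG_def)
    qed
  qed
  finally show ?thesis .
qed

lemma christoffel_eq:
  assumes F1: "\<And>t. (F has_real_derivative F1 t) (at t)"
    and f: "F (y 0) \<noteq> 0" and s: "sin (y 1) \<noteq> 0" and idx: "i < 4" "k < 4" "l < 4"
  shows "christoffel (s4_metric F F) y i k l = Gam (F (y 0)) (F1 (y 0)) (y 1) i k l"
proof -
  have gi: "ginv (s4_metric F F) y = gi (F (y 0)) (y 1)"
    by (rule ginv_eq[of "s4_metric F F" y "F (y 0)" "y 1", OF metric_eq f s])
  show ?thesis
    unfolding christoffel_def gi cpd_metric[OF F1]
    by (rule chr_alg[OF f s idx])
qed

definition dGr :: "real \<Rightarrow> real \<Rightarrow> real \<Rightarrow> real \<Rightarrow> nat \<Rightarrow> nat \<Rightarrow> nat \<Rightarrow> real" where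
  "dGr f f1 f2 th i k l = -(f1 * f1 + f * f2)/4 * e0 i * ghat th k l + (f2 * f - f1 * f1)/f^2 * cB i k l"
definition dGt :: "real \<Rightarrow> real \<Rightarrow> real \<Rightarrow> nat \<Rightarrow> nat \<Rightarrow> nat \<Rightarrow> real" where
  "dGt f f1 th i k l = (f * f1)/4 * e0 i * sin th * g1 k l + cos th/2 * h1 i k l
     - cos th/(2 * (sin th)^2) * h2 i k l - 1/(2 * (sin th)^2) * h3 i k l"
definition dGam :: "nat \<Rightarrow> real \<Rightarrow> real \<Rightarrow> real \<Rightarrow> real \<Rightarrow> nat \<Rightarrow> nat \<Rightarrow> nat \<Rightarrow> real" where
  "dGam k f f1 f2 th i l j = (if k = 0 then dGr f f1 f2 th i l j else if k = 1 then dGt f f1 th i l j else 0)"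

lemma Gam_deriv_r:
  assumes F1: "(F has_real_derivative F1 t) (at t)" and F2: "(F1 has_real_derivative F2 t) (at t)"
    and f: "F t \<noteq> 0"
  shows "((\<lambda>t. Gam (F t) (F1 t) th i k l) has_real_derivative dGr (F t) (F1 t) (F2 t) th i k l) (at t)"
  unfolding Gam_def dGr_def
  using f by (auto intro!: derivative_eq_intros F1 F2 simp: field_simps power2_eq_square)

lemma Gam_deriv_t:
  assumes s: "sin th \<noteq> 0"
  shows "((\<lambda>t. Gam f f1 t i k l) has_real_derivative dGt f f1 th i k l) (at th)"
proof -
  have trigX: "cos th * (cos th * X) + sin th * (sin th * X) = X" for X :: real
  proof -
    have "cos th * (cos th * X) + sin th * (sin th * X) = (cos th * cos th + sin th * sin th) * X"
      by (simp only: distrib_right mult.assoc)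
    thus ?thesis by simp
  qed
  show ?thesis unfolding Gam_def dGt_def ghat_def using s 
    apply (auto intro!: derivative_eq_intros simp: field_simps power2_eq_square)
    apply (simp add: trigX)
    done
qed


lemma cpd_chr:
  assumes F1: "\<And>t. (F has_real_derivative F1 t) (at t)" and F2: "\<And>t. (F1 has_real_derivative F2 t) (at t)"
   and f: "F (x 0) \<noteq> 0" and s: "sin (x 1) \<noteq> 0" and idx: "i < 4" "l < 4" "j < 4"
  shows "cpd k (\<lambda>y. christoffel (s4_metric F F) y i l j) x = dGam k (F (x 0)) (F1 (x 0)) (F2 (x 0)) (x 1) i l j"
proof -
  consider "k = 0" | "k = 1" | "k \<noteq> 0 \<and> k \<noteq> 1" by blast
  then show ?thesis
  proof cases
    case 1
    have cont: "continuous_on UNIV F" using F1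
      by (meson DERIV_continuous continuous_at_imp_continuous_on)
    have op: "open {t. F t \<noteq> 0}" by (rule open_Collect_neq[OF cont continuous_on_const])
    have eq: "Gam (F t) (F1 t) (x 1) i l j = christoffel (s4_metric F F) (x(0:=t)) i l j"
      if "t \<in> {t. F t \<noteq> 0}" for t
      using christoffel_eq[OF F1 _ _ idx, of "x(0:=t)"] that s by simp
    have d: "((\<lambda>t. christoffel (s4_metric F F) (x(0:=t)) i l j) has_real_derivative
               dGr (F (x 0)) (F1 (x 0)) (F2 (x 0)) (x 1) i l j) (at (x 0))"
      by (rule has_field_derivative_transform_within_open[OF Gam_deriv_r[of F F1 "x 0" F2 "x 1" i l j, OF F1 F2 f] op _ eq]) (use f in auto)
    then show ?thesis using 1 by (simp add: cpd_def dGam_def DERIV_imp_deriv)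
  next
    case 2
    have cs: "continuous_on UNIV (sin :: real \<Rightarrow> real)"
      by (rule continuous_at_imp_continuous_on) simp
    have op: "open {t::real. sin t \<noteq> 0}" by (rule open_Collect_neq[OF cs continuous_on_const])
    have eq: "Gam (F (x 0)) (F1 (x 0)) t i l j = christoffel (s4_metric F F) (x(1:=t)) i l j"
      if "t \<in> {t. sin t \<noteq> 0}" for t
      using christoffel_eq[OF F1 _ _ idx, of "x(1:=t)"] that f by simp
    have d: "((\<lambda>t. christoffel (s4_metric F F) (x(1:=t)) i l j) has_real_derivative
               dGt (F (x 0)) (F1 (x 0)) (x 1) i l j) (at (x 1))"
      by (rule has_field_derivative_transform_within_open[OF Gam_deriv_t[OF s] op _ eq]) (use s in auto)
    then show ?thesis using 2 by (simp add: cpd_def dGam_def DERIV_imp_deriv)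
  next
    case 3
    have eq: "(\<lambda>t. christoffel (s4_metric F F) (x(k:=t)) i l j) = (\<lambda>t. Gam (F (x 0)) (F1 (x 0)) (x 1) i l j)"
    proof
      fix t
      show "christoffel (s4_metric F F) (x(k:=t)) i l j = Gam (F (x 0)) (F1 (x 0)) (x 1) i l j"
        using christoffel_eq[OF F1 _ _ idx, of "x(k:=t)"] f s 3 by simp
    qed
    show ?thesis unfolding cpd_def eq using 3 by (simp add: dGam_def)
  qed
qed



definition RU :: "real \<Rightarrow> real \<Rightarrow> real \<Rightarrow> real \<Rightarrow> nat \<Rightarrow> nat \<Rightarrow> nat \<Rightarrow> nat \<Rightarrow> real" where
  "RU f f1 f2 th i j k l = dGam k f f1 f2 th i l j - dGam l f f1 f2 th i k j +
     (\<Sum>m<4. Gam f f1 th i k m * Gam f f1 th m l j - Gam f f1 th i l m * Gam f f1 th m k j)"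
definition Rc :: "real \<Rightarrow> real \<Rightarrow> real \<Rightarrow> real \<Rightarrow> nat \<Rightarrow> nat \<Rightarrow> nat \<Rightarrow> nat \<Rightarrow> real" where
  "Rc f f1 f2 th i j k l = (\<Sum>m<4. gm f th i m * RU f f1 f2 th m j k l)"
definition Rform :: "real \<Rightarrow> real \<Rightarrow> real \<Rightarrow> real \<Rightarrow> nat \<Rightarrow> nat \<Rightarrow> nat \<Rightarrow> nat \<Rightarrow> real" where
  "Rform f f1 f2 th i j k l = (1 - f1^2)/f^2 * (gm f th i k * gm f th j l - gm f th i l * gm f th j k)
    + (-f2/f - (1 - f1^2)/f^2) * (e0 i * e0 k * gm f th j l - e0 i * e0 l * gm f th j k
         - e0 j * e0 k * gm f th i l + e0 j * e0 l * gm f th i k)"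

lemma Rc_Rform:
  assumes f: "f \<noteq> 0" and s: "sin th \<noteq> 0"
  and ci: "i = 0 \<or> i = 1 \<or> i = 2 \<or> i = 3" and cj: "j = 0 \<or> j = 1 \<or> j = 2 \<or> j = 3"
  and ck: "k = 0 \<or> k = 1 \<or> k = 2 \<or> k = 3" and cl: "l = 0 \<or> l = 1 \<or> l = 2 \<or> l = 3"
  shows "Rc f f1 f2 th i j k l = Rform f f1 f2 th i j k l"
proof -
  have ss: "sin th * sin th = 1 - cos th * cos th" using sin_cos_squared_add3[of th] by linarith
  have cc: "\<And>x. cos th * (cos th * x) = x - sin th * (sin th * x)"
    by (metis ss diff_add_cancel distrib_right mult.assoc mult_1 add_diff_cancel_left')
  have cc2: "cos th * cos th = 1 - sin th * sin th" using ss by simp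
  show ?thesis
    using ci cj ck cl
    apply (elim disjE; simp only:)
    unfolding Rc_def RU_def Rform_def sum4 dGam_def dGr_def dGt_def Gam_def gm_def ghat_def g0_def g1_def d00_def h1_def h2_def h3_def cB_def e0_def
    apply (simp_all add: field_simps f s power2_eq_square)
    apply ((simp_all add: cc algebra_simps)?)
    apply ((simp_all add: cc2 algebra_simps)?)
    done
qed

lemma riemann_eq:
  assumes F1: "\<And>t. (F has_real_derivative F1 t) (at t)" and F2: "\<And>t. (F1 has_real_derivative F2 t) (at t)"
   and f: "F (x 0) \<noteq> 0" and s: "sin (x 1) \<noteq> 0"
   and ci: "i = 0 \<or> i = 1 \<or> i = 2 \<or> i = 3" and cj: "j = 0 \<or> j = 1 \<or> j = 2 \<or> j = 3"
   and ck: "k = 0 \<or> k = 1 \<or> k = 2 \<or> k = 3" and cl: "l = 0 \<or> l = 1 \<or> l = 2 \<or> l = 3"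
  shows "riemann (s4_metric F F) x i j k l = Rc (F (x 0)) (F1 (x 0)) (F2 (x 0)) (x 1) i j k l"
proof -
  have c1: "cpd k (\<lambda>y. christoffel (s4_metric F F) y i l j) x = dGam k (F (x 0)) (F1 (x 0)) (F2 (x 0)) (x 1) i l j"
    if "i < 4" "l < 4" "j < 4" for i l j k
    by (rule cpd_chr[OF F1 F2 f s that])
  have c2: "christoffel (s4_metric F F) x i k l = Gam (F (x 0)) (F1 (x 0)) (x 1) i k l"
    if "i < 4" "k < 4" "l < 4" for i k l
    by (rule christoffel_eq[OF F1 f s that])
  have ru: "riemann_up (s4_metric F F) x m j k l = RU (F (x 0)) (F1 (x 0)) (F2 (x 0)) (x 1) m j k l"
    if "m < 4" for m
    using ci cj ck cl that unfolding riemann_up_def RU_def sum4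
    by (auto simp: c1 c2)
  show ?thesis
    unfolding riemann_def Rc_def sum4 metric_eq
    by (simp add: ru)
qed




definition fsum :: "(nat\<Rightarrow>real) \<Rightarrow> (nat\<Rightarrow>real) \<Rightarrow> (nat\<Rightarrow>real) \<Rightarrow> (nat\<Rightarrow>real) \<Rightarrow> (nat\<Rightarrow>nat\<Rightarrow>nat\<Rightarrow>nat\<Rightarrow>real) \<Rightarrow> real" where
 "fsum u v w z R = (\<Sum>i<4. \<Sum>j<4. \<Sum>k<4. \<Sum>l<4. R i j k l * u i * v j * w k * z l)"
definition bf :: "(nat\<Rightarrow>nat\<Rightarrow>real) \<Rightarrow> (nat\<Rightarrow>real) \<Rightarrow> (nat\<Rightarrow>real) \<Rightarrow> real" where
 "bf X u w = (\<Sum>i<4. \<Sum>k<4. X i k * u i * w k)"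

lemma fsum_add: "fsum u v w z (\<lambda>i j k l. R1 i j k l + R2 i j k l) = fsum u v w z R1 + fsum u v w z R2"
  by (simp add: fsum_def sum.distrib distrib_right)
lemma fsum_diff: "fsum u v w z (\<lambda>i j k l. R1 i j k l - R2 i j k l) = fsum u v w z R1 - fsum u v w z R2"
  by (simp add: fsum_def sum_subtractf left_diff_distrib)
lemma fsum_cmult: "fsum u v w z (\<lambda>i j k l. c * R i j k l) = c * fsum u v w z R"
  by (simp add: fsum_def sum_distrib_left mult.assoc)

lemma fsum_F1: "fsum u v w z (\<lambda>i j k l. X i k * Y j l) = bf X u w * bf Y v z"
  by (simp add: fsum_def bf_def sum4 algebra_simps)
lemma fsum_F2: "fsum u v w z (\<lambda>i j k l. X i l * Y j k) = bf X u z * bf Y v w"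
  by (simp add: fsum_def bf_def sum4 algebra_simps)
lemma fsum_F3: "fsum u v w z (\<lambda>i j k l. X j l * Y i k) = bf Y u w * bf X v z"
  by (simp add: fsum_def bf_def sum4 algebra_simps)
lemma fsum_F4: "fsum u v w z (\<lambda>i j k l. X j k * Y i l) = bf Y u z * bf X v w"
  by (simp add: fsum_def bf_def sum4 algebra_simps)

lemma fsum_cong:
  assumes "\<And>i j k l. i < 4 \<Longrightarrow> j < 4 \<Longrightarrow> k < 4 \<Longrightarrow> l < 4 \<Longrightarrow> R i j k l = R' i j k l"
  shows "fsum u v w z R = fsum u v w z R'"
  unfolding fsum_def using assms by (intro sum.cong refl) auto

definition Ef :: "real \<Rightarrow> real \<Rightarrow> nat \<Rightarrow> nat \<Rightarrow> real" where
  "Ef f th a i =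
     (if a = 0 \<and> i = 1 then 2 / f
      else if a = 1 \<and> i = 2 then 2 / (f * sin th)
      else if a = 1 \<and> i = 3 then - 2 * cos th / (f * sin th)
      else if a = 2 \<and> i = 3 then 2 / f
      else if a = 3 \<and> i = 0 then 1
      else 0)"

lemma frame_eq: "s4_frame F F x a i = Ef (F (x 0)) (x 1) a i"
  by (simp add: s4_frame_def Ef_def)

lemma bf_N: "bf (\<lambda>i k. e0 i * e0 k) (Ef f th a) (Ef f th c) = (if a = 3 then 1 else 0) * (if c = 3 then 1 else 0)"
  by (simp add: bf_def sum4 e0_def Ef_def)

lemma bf_gm:
  assumes f: "f \<noteq> 0" and s: "sin th \<noteq> 0"
   and ca: "a = 0 \<or> a = 1 \<or> a = 2 \<or> a = 3" and cc: "c = 0 \<or> c = 1 \<or> c = 2 \<or> c = 3"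
  shows "bf (gm f th) (Ef f th a) (Ef f th c) = (if a = c then 1 else 0)"
proof -
  have ss: "sin th * sin th = 1 - cos th * cos th" using sin_cos_squared_add3[of th] by linarith
  have cc2: "cos th * cos th = 1 - sin th * sin th" using ss by simp
  show ?thesis using ca cc
    apply (elim disjE; simp only:)
    unfolding bf_def sum4 gm_def Ef_def ghat_def g0_def g1_def d00_def
    apply (simp_all add: field_simps f s power2_eq_square)
    apply ((simp_all add: cc2 algebra_simps)?)
    done
qed




lemma idx4: "(i::nat) < 4 \<Longrightarrow> i = 0 \<or> i = 1 \<or> i = 2 \<or> i = 3" by auto

lemma frame_main:
  assumes F1: "\<And>t. (F has_real_derivative F1 t) (at t)" and F2: "\<And>t. (F1 has_real_derivative F2 t) (at t)"
   and f: "F (x 0) \<noteq> 0" and s: "sin (x 1) \<noteq> 0"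
   and abcd: "a < 4" "b < 4" "c < 4" "d < 4"
  shows "frame_riemann (s4_metric F F) (s4_frame F F) x a b c d =
     (1 - (F1 (x 0))^2)/(F (x 0))^2 * ((if a = c then 1 else 0) * (if b = d then 1 else 0)
               - (if a = d then 1 else 0) * (if b = c then 1 else 0))
   + (- F2 (x 0) / F (x 0) - (1 - (F1 (x 0))^2)/(F (x 0))^2) *
     ((if a = 3 then 1 else 0) * (if c = 3 then 1 else 0) * (if b = d then 1 else 0)
      - (if a = 3 then 1 else 0) * (if d = 3 then 1 else 0) * (if b = c then 1 else 0)
      - (if b = 3 then 1 else 0) * (if c = 3 then 1 else 0) * (if a = d then 1 else 0)
      + (if b = 3 then 1 else 0) * (if d = 3 then 1 else 0) * (if a = c then 1 else 0))"
proof -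
  have ia: "a = 0 \<or> a = 1 \<or> a = 2 \<or> a = 3" and ib: "b = 0 \<or> b = 1 \<or> b = 2 \<or> b = 3"
    and ic: "c = 0 \<or> c = 1 \<or> c = 2 \<or> c = 3" and id: "d = 0 \<or> d = 1 \<or> d = 2 \<or> d = 3"
    using abcd by auto
  let ?f = "F (x 0)" and ?f1 = "F1 (x 0)" and ?f2 = "F2 (x 0)" and ?th = "x 1"
  have "frame_riemann (s4_metric F F) (s4_frame F F) x a b c d =
        fsum (Ef ?f ?th a) (Ef ?f ?th b) (Ef ?f ?th c) (Ef ?f ?th d) (riemann (s4_metric F F) x)"
    unfolding frame_riemann_def fsum_def frame_eq by simp
  also have "\<dots> = fsum (Ef ?f ?th a) (Ef ?f ?th b) (Ef ?f ?th c) (Ef ?f ?th d) (Rform ?f ?f1 ?f2 ?th)"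
  proof (rule fsum_cong)
    fix i j k l :: nat assume "i < 4" "j < 4" "k < 4" "l < 4"
    note ii = idx4[OF this(1)] idx4[OF this(2)] idx4[OF this(3)] idx4[OF this(4)]
    show "riemann (s4_metric F F) x i j k l = Rform ?f ?f1 ?f2 ?th i j k l"
      using riemann_eq[OF F1 F2 f s ii] Rc_Rform[OF f s ii] by simp
  qed
  also have "\<dots> = (1 - ?f1^2)/?f^2 * (bf (gm ?f ?th) (Ef ?f ?th a) (Ef ?f ?th c) * bf (gm ?f ?th) (Ef ?f ?th b) (Ef ?f ?th d)
        - bf (gm ?f ?th) (Ef ?f ?th a) (Ef ?f ?th d) * bf (gm ?f ?th) (Ef ?f ?th b) (Ef ?f ?th c))
     + (-?f2/?f - (1 - ?f1^2)/?f^2) *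
       (bf (\<lambda>i k. e0 i * e0 k) (Ef ?f ?th a) (Ef ?f ?th c) * bf (gm ?f ?th) (Ef ?f ?th b) (Ef ?f ?th d)
      - bf (\<lambda>i k. e0 i * e0 k) (Ef ?f ?th a) (Ef ?f ?th d) * bf (gm ?f ?th) (Ef ?f ?th b) (Ef ?f ?th c)
      - bf (\<lambda>i k. e0 i * e0 k) (Ef ?f ?th b) (Ef ?f ?th c) * bf (gm ?f ?th) (Ef ?f ?th a) (Ef ?f ?th d)
      + bf (\<lambda>i k. e0 i * e0 k) (Ef ?f ?th b) (Ef ?f ?th d) * bf (gm ?f ?th) (Ef ?f ?th a) (Ef ?f ?th c))"
    unfolding Rform_def
    by (simp only: fsum_add fsum_diff fsum_cmult fsum_F1 fsum_F2 fsum_F3 fsum_F4; simp only: mult_ac)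
  finally show ?thesis
    by (simp only: bf_gm[OF f s ia ic] bf_gm[OF f s ib id] bf_gm[OF f s ia id] bf_gm[OF f s ib ic] bf_N)
qed


lemma alg_eps:
  fixes S Co r c1 c2 e hh hh1 :: real
  assumes SC: "S^2 + Co^2 = 1" and Fn: "S + e * hh \<noteq> 0"
    and hhd: "hh = c1 * Co + c2 * (S - r * Co)" and HH1d: "hh1 = - c1 * S + c2 * (r * S)"
  shows "(1 - (Co + e * hh1)^2)/(S + e * hh)^2 - (1 - 2 * e * c2)
          = e^2 * ((- (hh1^2) - hh^2 + 4 * c2 * S * hh + e * (2 * c2 * hh^2))/(S + e * hh)^2)"
    and "- (- S + e * (- c1 * Co + c2 * (S + r * Co)))/(S + e * hh) - (1 - (Co + e * hh1)^2)/(S + e * hh)^2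
          = e^2 * (2 * c2 * hh/(S + e * hh) - (- (hh1^2) - hh^2 + 4 * c2 * S * hh + e * (2 * c2 * hh^2))/(S + e * hh)^2)"
proof -
  let ?P = "- (hh1^2) - hh^2 + 4 * c2 * S * hh + e * (2 * c2 * hh^2)"
  have num: "1 - (Co + e * hh1)^2 - (1 - 2 * e * c2) * (S + e * hh)^2 = e^2 * ?P + (1 - S^2 - Co^2)"
    unfolding hhd HH1d by (simp add: algebra_simps power2_eq_square)
  have A: "(1 - (Co + e * hh1)^2)/(S + e * hh)^2 - (1 - 2 * e * c2)
      = (1 - (Co + e * hh1)^2 - (1 - 2 * e * c2) * (S + e * hh)^2)/(S + e * hh)^2"
    using Fn by (simp add: field_simps)
  also have "\<dots> = e^2 * (?P/(S + e * hh)^2)" unfolding num using SC by simp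
  finally show A2: "(1 - (Co + e * hh1)^2)/(S + e * hh)^2 - (1 - 2 * e * c2) = e^2 * (?P/(S + e * hh)^2)" .
  have B: "- (- S + e * (- c1 * Co + c2 * (S + r * Co)))/(S + e * hh) - (1 - 2 * e * c2) = e^2 * (2 * c2 * hh/(S + e * hh))"
  proof -
    have "- (- S + e * (- c1 * Co + c2 * (S + r * Co))) = (S + e * hh) - 2 * e * c2 * S"
      unfolding hhd by (simp add: algebra_simps)
    hence "- (- S + e * (- c1 * Co + c2 * (S + r * Co)))/(S + e * hh) = 1 - 2 * e * c2 * S / (S + e * hh)"
      using Fn by (simp add: field_simps)
    also have "1 - 2 * e * c2 * S / (S + e * hh) - (1 - 2 * e * c2) = e^2 * (2 * c2 * hh/(S + e * hh))"
      using Fn by (simp add: field_simps power2_eq_square)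
    finally show ?thesis by simp
  qed
  show "- (- S + e * (- c1 * Co + c2 * (S + r * Co)))/(S + e * hh) - (1 - (Co + e * hh1)^2)/(S + e * hh)^2
          = e^2 * (2 * c2 * hh/(S + e * hh) - ?P/(S + e * hh)^2)"
    using A2 B by (simp add: algebra_simps)
qed


lemma curv_part:
  fixes c1 c2 :: real and x :: "nat \<Rightarrow> real" and a b c d :: nat
  assumes x0: "0 < x 0" "x 0 < pi" and x1: "0 < x 1" "x 1 < pi"
    and abcd: "a < 4" "b < 4" "c < 4" "d < 4"
  shows "(\<lambda>\<epsilon>::real.
          frame_riemann
            (s4_metric (\<lambda>r. sin r + \<epsilon> * (c1 * cos r + c2 * (sin r - r * cos r)))
                       (\<lambda>r. sin r + \<epsilon> * (c1 * cos r + c2 * (sin r - r * cos r))))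
            (s4_frame (\<lambda>r. sin r + \<epsilon> * (c1 * cos r + c2 * (sin r - r * cos r)))
                      (\<lambda>r. sin r + \<epsilon> * (c1 * cos r + c2 * (sin r - r * cos r))))
            x a b c d
          - (1 - 2 * \<epsilon> * c2) *
              ((if a = c then 1 else 0) * (if b = d then 1 else 0)
               - (if a = d then 1 else 0) * (if b = c then 1 else 0)))
       \<in> O[at 0](\<lambda>\<epsilon>. \<epsilon>\<^sup>2)"
proof -
  define FR where "FR \<epsilon> = frame_riemann
            (s4_metric (\<lambda>r. sin r + \<epsilon> * (c1 * cos r + c2 * (sin r - r * cos r)))
                       (\<lambda>r. sin r + \<epsilon> * (c1 * cos r + c2 * (sin r - r * cos r))))
            (s4_frame (\<lambda>r. sin r + \<epsilon> * (c1 * cos r + c2 * (sin r - r * cos r)))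
                      (\<lambda>r. sin r + \<epsilon> * (c1 * cos r + c2 * (sin r - r * cos r))))
            x a b c d" for \<epsilon> :: real
  define D1 :: real where "D1 = (if a = c then 1 else 0) * (if b = d then 1 else 0)
               - (if a = d then 1 else 0) * (if b = c then 1 else 0)"
  define D2 :: real where "D2 = (if a = 3 then 1 else 0) * (if c = 3 then 1 else 0) * (if b = d then 1 else 0)
      - (if a = 3 then 1 else 0) * (if d = 3 then 1 else 0) * (if b = c then 1 else 0)
      - (if b = 3 then 1 else 0) * (if c = 3 then 1 else 0) * (if a = d then 1 else 0)
      + (if b = 3 then 1 else 0) * (if d = 3 then 1 else 0) * (if a = c then 1 else 0)"
  define r where "r = x 0"
  define S where "S = sin r"
  define Co where "Co = cos r"
  define hh where "hh = c1 * Co + c2 * (S - r * Co)"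
  define hh1 where "hh1 = - c1 * S + c2 * (r * S)"
  define P where "P e = - (hh1^2) - hh^2 + 4 * c2 * S * hh + e * (2 * c2 * hh^2)" for e :: real
  define QA where "QA e = P e / (S + e * hh)^2" for e :: real
  define QC where "QC e = 2 * c2 * hh / (S + e * hh) - QA e" for e :: real
  have S0: "S > 0" unfolding S_def r_def using x0 by (simp add: sin_gt_zero)
  have sth: "sin (x 1) \<noteq> 0" using x1 sin_gt_zero by fastforce
  have SC: "S^2 + Co^2 = 1" unfolding S_def Co_def by simp
  have der1: "((\<lambda>r. sin r + e * (c1 * cos r + c2 * (sin r - r * cos r))) has_real_derivative
                (cos t + e * (- c1 * sin t + c2 * (t * sin t)))) (at t)" for e t :: real
    by (auto intro!: derivative_eq_intros simp: algebra_simps)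
  have der2: "((\<lambda>t. cos t + e * (- c1 * sin t + c2 * (t * sin t))) has_real_derivative
                (- sin t + e * (- c1 * cos t + c2 * (sin t + t * cos t)))) (at t)" for e t :: real
    by (auto intro!: derivative_eq_intros simp: algebra_simps)
  have lim: "((\<lambda>e. S + e * hh) \<longlongrightarrow> S) (at (0::real))"
    by (auto intro!: tendsto_eq_intros)
  have ev1: "eventually (\<lambda>e. S + e * hh \<noteq> 0) (at (0::real))"
    using tendsto_imp_eventually_ne[OF lim, of 0] S0 by simp
  have ev2: "eventually (\<lambda>e::real. e \<noteq> 0) (at 0)" by (simp add: eventually_at_filter)
  have key: "FR e - (1 - 2 * e * c2) * D1 = e^2 * (QA e * D1 + QC e * D2)"
    if Fn: "S + e * hh \<noteq> 0" for e :: real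
  proof -
    have fne: "(\<lambda>r. sin r + e * (c1 * cos r + c2 * (sin r - r * cos r))) (x 0) \<noteq> 0"
      using Fn unfolding hh_def S_def Co_def r_def by simp
    have fm: "FR e = (1 - (cos (x 0) + e * (- c1 * sin (x 0) + c2 * (x 0 * sin (x 0))))^2)
          / (sin (x 0) + e * (c1 * cos (x 0) + c2 * (sin (x 0) - x 0 * cos (x 0))))^2 * D1
        + (- (- sin (x 0) + e * (- c1 * cos (x 0) + c2 * (sin (x 0) + x 0 * cos (x 0))))
            / (sin (x 0) + e * (c1 * cos (x 0) + c2 * (sin (x 0) - x 0 * cos (x 0))))
           - (1 - (cos (x 0) + e * (- c1 * sin (x 0) + c2 * (x 0 * sin (x 0))))^2)
          / (sin (x 0) + e * (c1 * cos (x 0) + c2 * (sin (x 0) - x 0 * cos (x 0))))^2) * D2"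
      unfolding FR_def D1_def D2_def
      using frame_main[OF der1[of e] der2[of e] fne sth abcd] by simp
    have fm2: "FR e = (1 - (Co + e * hh1)^2)/(S + e * hh)^2 * D1
       + (- (- S + e * (- c1 * Co + c2 * (S + r * Co)))/(S + e * hh) - (1 - (Co + e * hh1)^2)/(S + e * hh)^2) * D2"
      unfolding fm hh_def hh1_def S_def Co_def r_def by simp
    note A = alg_eps(1)[OF SC Fn hh_def hh1_def] and C = alg_eps(2)[OF SC Fn hh_def hh1_def]
    have "FR e - (1 - 2 * e * c2) * D1 = ((1 - (Co + e * hh1)^2)/(S + e * hh)^2 - (1 - 2 * e * c2)) * D1
       + (- (- S + e * (- c1 * Co + c2 * (S + r * Co)))/(S + e * hh) - (1 - (Co + e * hh1)^2)/(S + e * hh)^2) * D2"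
      unfolding fm2 by (simp add: algebra_simps)
    also have "\<dots> = e^2 * (QA e * D1 + QC e * D2)"
      unfolding A C QA_def QC_def P_def by (simp add: algebra_simps)
    finally show ?thesis .
  qed
  have ev: "eventually (\<lambda>e. (FR e - (1 - 2 * e * c2) * D1) / e^2 = QA e * D1 + QC e * D2) (at (0::real))"
    using ev1 ev2 by eventually_elim (simp add: key)
  have cont: "((\<lambda>e. QA e * D1 + QC e * D2) \<longlongrightarrow> QA 0 * D1 + QC 0 * D2) (at (0::real))"
    unfolding QA_def QC_def P_def using S0
    by (auto intro!: tendsto_eq_intros)
  have lim2: "((\<lambda>e. (FR e - (1 - 2 * e * c2) * D1) / e^2) \<longlongrightarrow> QA 0 * D1 + QC 0 * D2) (at (0::real))"
    using tendsto_cong[OF ev] cont by simp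
  have "(\<lambda>e. FR e - (1 - 2 * e * c2) * D1) \<in> O[at 0](\<lambda>e. e^2)"
    by (rule bigoI_tendsto[OF lim2]) (use ev2 in \<open>eventually_elim, simp\<close>)
  then show ?thesis unfolding FR_def D1_def .
qed




lemma smooth_facts:
  assumes "smooth_on_closed 0 pi p"
  obtains p1 p2 where "continuous_on {0..pi} p"
    "\<And>r. r \<in> {0<..<pi} \<Longrightarrow> (p has_real_derivative p1 r) (at r)"
    "\<And>r. r \<in> {0<..<pi} \<Longrightarrow> (p1 has_real_derivative p2 r) (at r)"
    "\<And>r. r \<in> {0<..<pi} \<Longrightarrow> deriv p r = p1 r"
    "\<And>r. r \<in> {0<..<pi} \<Longrightarrow> deriv (deriv p) r = p2 r"
proof -
  obtain D where D0: "\<forall>x\<in>{0..pi}. D 0 x = p x"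
    and Dn: "\<forall>n. \<forall>x\<in>{0..pi}. (D n has_real_derivative D (Suc n) x) (at x within {0..pi})"
    using assms unfolding smooth_on_closed_def by blast
  have at: "(D n has_real_derivative D (Suc n) r) (at r)" if r: "r \<in> {0<..<pi}" for n r
  proof -
    have "r \<in> interior {0..pi}" using r by simp
    then have e: "at r within {0..pi} = at r" by (rule at_within_interior)
    have "r \<in> {0..pi}" using r by auto
    with Dn have "(D n has_real_derivative D (Suc n) r) (at r within {0..pi})" by blast
    then show ?thesis by (simp only: e)
  qed
  have cD: "continuous_on {0..pi} (D 0)"
    unfolding continuous_on_eq_continuous_within
    using Dn DERIV_continuous by blast
  have cont: "continuous_on {0..pi} p"
    using continuous_on_cong[OF refl, of "{0..pi}" "D 0" p] cD D0 by auto
  have dp: "(p has_real_derivative D (Suc 0) r) (at r)" if r: "r \<in> {0<..<pi}" for r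
    by (rule has_field_derivative_transform_within_open[OF at[OF r, of 0] open_greaterThanLessThan r])
       (use D0 in auto)
  have d1: "deriv p r = D (Suc 0) r" if r: "r \<in> {0<..<pi}" for r
    using dp[OF r] by (rule DERIV_imp_deriv)
  have dd: "(deriv p has_real_derivative D (Suc (Suc 0)) r) (at r)" if r: "r \<in> {0<..<pi}" for r
    by (rule has_field_derivative_transform_within_open[OF at[OF r, of "Suc 0"] open_greaterThanLessThan r])
       (use d1 in auto)
  have d2: "deriv (deriv p) r = D (Suc (Suc 0)) r" if r: "r \<in> {0<..<pi}" for r
    using dd[OF r] by (rule DERIV_imp_deriv)
  show thesis
    by (rule that[of "D (Suc 0)" "D (Suc (Suc 0))"]) (use cont dp at d1 d2 in auto)
qed

lemma agree_closure:
  fixes f g :: "real \<Rightarrow> real"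
  assumes "continuous_on {0..pi} f" "continuous_on {0..pi} g" "\<And>r. r \<in> {0<..<pi} \<Longrightarrow> f r = g r"
    and r: "r \<in> {0..pi}"
  shows "f r = g r"
proof -
  have cl: "closure {0<..<pi} = {0..(pi::real)}" by (simp add: pi_gt_zero)
  have "(\<lambda>t. f t - g t) r = 0"
    by (rule continuous_constant_on_closure[of "{0<..<pi}"]) (use assms cl in \<open>auto intro: continuous_on_diff\<close>)
  then show ?thesis by simp
qed

lemma wronsk:
  fixes a b K :: real and w wd wdd ya yad yadd yb ybd ybdd P Q E :: "real \<Rightarrow> real"
  assumes dw: "\<And>r. r \<in> {a<..<b} \<Longrightarrow> (w has_real_derivative wd r) (at r)"
               "\<And>r. r \<in> {a<..<b} \<Longrightarrow> (wd has_real_derivative wdd r) (at r)"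
   and ow: "\<And>r. r \<in> {a<..<b} \<Longrightarrow> wdd r = P r * wd r + Q r * w r"
   and d1: "\<And>r. r \<in> {a<..<b} \<Longrightarrow> (ya has_real_derivative yad r) (at r)"
               "\<And>r. r \<in> {a<..<b} \<Longrightarrow> (yad has_real_derivative yadd r) (at r)"
   and o1: "\<And>r. r \<in> {a<..<b} \<Longrightarrow> yadd r = P r * yad r + Q r * ya r"
   and d2: "\<And>r. r \<in> {a<..<b} \<Longrightarrow> (yb has_real_derivative ybd r) (at r)"
               "\<And>r. r \<in> {a<..<b} \<Longrightarrow> (ybd has_real_derivative ybdd r) (at r)"
   and o2: "\<And>r. r \<in> {a<..<b} \<Longrightarrow> ybdd r = P r * ybd r + Q r * yb r"
   and dE: "\<And>r. r \<in> {a<..<b} \<Longrightarrow> (E has_real_derivative (- P r * E r)) (at r)"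
   and K: "K \<noteq> 0" "\<And>r. r \<in> {a<..<b} \<Longrightarrow> (ya r * ybd r - yad r * yb r) * E r = K"
  shows "\<exists>\<alpha> \<beta>. \<forall>r\<in>{a<..<b}. w r = \<alpha> * ya r + \<beta> * yb r"
proof -
  have const: "\<exists>A. \<forall>r\<in>{a<..<b}. (w r * zd r - wd r * z r) * E r = A"
    if dz: "\<And>r. r \<in> {a<..<b} \<Longrightarrow> (z has_real_derivative zd r) (at r)"
           "\<And>r. r \<in> {a<..<b} \<Longrightarrow> (zd has_real_derivative zdd r) (at r)"
      and oz: "\<And>r. r \<in> {a<..<b} \<Longrightarrow> zdd r = P r * zd r + Q r * z r" for z zd zdd
  proof (rule has_field_derivative_zero_constant)
    show "convex {a<..<b}" by simp
    fix r assume r: "r \<in> {a<..<b}"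
    have D: "((\<lambda>r. (w r * zd r - wd r * z r) * E r) has_real_derivative
        ((wd r * zd r + w r * zdd r - (wdd r * z r + wd r * zd r)) * E r + (w r * zd r - wd r * z r) * (- P r * E r))) (at r)"
      by (auto intro!: derivative_eq_intros dw[OF r] dz[OF r] dE[OF r] simp: algebra_simps)
    have Z: "(wd r * zd r + w r * zdd r - (wdd r * z r + wd r * zd r)) * E r + (w r * zd r - wd r * z r) * (- P r * E r) = 0"
      using ow[OF r] oz[OF r] by (simp add: algebra_simps)
    have "((\<lambda>r. (w r * zd r - wd r * z r) * E r) has_field_derivative 0) (at r)"
      using D by (simp only: Z)
    then show "((\<lambda>r. (w r * zd r - wd r * z r) * E r) has_field_derivative 0) (at r within {a<..<b})"
      by (rule has_field_derivative_at_within)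
  qed
  obtain A where A: "\<forall>r\<in>{a<..<b}. (w r * yad r - wd r * ya r) * E r = A" using const[OF d1 o1] by blast
  obtain B where B: "\<forall>r\<in>{a<..<b}. (w r * ybd r - wd r * yb r) * E r = B" using const[OF d2 o2] by blast
  show ?thesis
  proof (intro exI ballI)
    fix r assume r: "r \<in> {a<..<b}"
    have "B * ya r - A * yb r = ((w r * ybd r - wd r * yb r) * E r) * ya r - ((w r * yad r - wd r * ya r) * E r) * yb r"
      using A B r by simp
    also have "\<dots> = w r * ((ya r * ybd r - yad r * yb r) * E r)" by (simp add: algebra_simps)
    also have "\<dots> = w r * K" using K r by simp
    finally have "w r * K = B * ya r - A * yb r" by simp
    then show "w r = (B / K) * ya r + (- A / K) * yb r" using K(1) by (simp add: field_simps)
  qed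
qed

lemma v_ode_alg:
  fixes s c P Q P1 Q1 :: real
  assumes s: "s \<noteq> 0" and SC: "s^2 + c^2 = 1"
  shows "(Q + (P1 + Q1) * (c/s) + 3/s^2 * (P - Q) - (2* P - Q + 2* P1* (c/s) - 6/s^2* (P-Q))) * s^3
         + 6* (P1 - Q1)* s^2* c + (P - Q)* (6* s* c^2 - 3* s^3)
       = 5* c/s * ((P1 - Q1)* s^3 + 3* (P-Q)* s^2* c) + 4* ((P-Q)* s^3)"
proof -
  have D: "(Q + (P1 + Q1) * (c/s) + 3/s^2 * (P - Q) - (2* P - Q + 2* P1* (c/s) - 6/s^2* (P-Q))) * s^3
         + 6* (P1 - Q1)* s^2* c + (P - Q)* (6* s* c^2 - 3* s^3) - (5* c/s * ((P1 - Q1)* s^3 + 3* (P-Q)* s^2* c) + 4* ((P-Q)* s^3)) = 9* (P-Q)* s* (1 - s^2 - c^2)"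
    using s by (simp add: field_simps power2_eq_square power3_eq_cube)
  have z: "1 - s^2 - c^2 = 0" using SC by simp
  have "(Q + (P1 + Q1) * (c/s) + 3/s^2 * (P - Q) - (2* P - Q + 2* P1* (c/s) - 6/s^2* (P-Q))) * s^3
         + 6* (P1 - Q1)* s^2* c + (P - Q)* (6* s* c^2 - 3* s^3) - (5* c/s * ((P1 - Q1)* s^3 + 3* (P-Q)* s^2* c) + 4* ((P-Q)* s^3)) = 0" unfolding D z by simp
  then show ?thesis by simp
qed

lemma y1_alg:
  fixes s c :: real
  assumes s: "s \<noteq> 0" and SC: "s^2 + c^2 = 1"
  shows "4 * c * (1 - c)^2 * (2 + c) + 12 * s^2 * (1 - c) * (1 + c)
      = 5 * c / s * (4 * s * (1 - c)^2 * (2 + c)) + 4 * ((1 - c)^3 * (3 + c))"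
proof -
  have s2: "s^2 = 1 - c^2" using SC by simp
  show ?thesis using s unfolding s2 by (simp add: field_simps) (simp add: algebra_simps power2_eq_square power3_eq_cube)
qed

lemma y2_alg:
  fixes s c :: real
  assumes s: "s \<noteq> 0" and SC: "s^2 + c^2 = 1"
  shows "- 4 * c * (1 + c)^2 * (2 - c) + 12 * s^2 * (1 + c) * (1 - c)
      = 5 * c / s * (- 4 * s * (1 + c)^2 * (2 - c)) + 4 * ((1 + c)^3 * (3 - c))"
proof -
  have s2: "s^2 = 1 - c^2" using SC by simp
  show ?thesis using s unfolding s2 by (simp add: field_simps) (simp add: algebra_simps power2_eq_square power3_eq_cube)
qed

lemma K_alg:
  fixes s c :: real
  assumes s: "s \<noteq> 0" and SC: "s^2 + c^2 = 1"
  shows "((1 - c)^3 * (3 + c) * (- 4 * s * (1 + c)^2 * (2 - c)) - 4 * s * (1 - c)^2 * (2 + c) * ((1 + c)^3 * (3 - c))) * (1 / s^5) = -48"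
proof -
  have s2: "s^2 = 1 - c^2" using SC by simp
  have s5: "s^5 = s * (s^2)^2" by (simp add: power_mult_distrib power2_eq_square algebra_simps eval_nat_numeral)
  have "(1 - c)^3 * (3 + c) * (- 4 * s * (1 + c)^2 * (2 - c)) - 4 * s * (1 - c)^2 * (2 + c) * ((1 + c)^3 * (3 - c)) = -48 * s^5"
    unfolding s5 s2 by (simp add: algebra_simps power2_eq_square power3_eq_cube)
  then show ?thesis using s by simp
qed

lemma part1_fwd:
  fixes p q :: "real \<Rightarrow> real"
  assumes sp: "smooth_on_closed 0 pi p" and sq: "smooth_on_closed 0 pi q"
    and ode: "\<forall>r\<in>{0<..<pi}.
           deriv (deriv p) r - q r
             = (deriv p r + deriv q r) * cot r + 3 / (sin r)\<^sup>2 * (p r - q r) \<and>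
           deriv (deriv q) r + q r - 2 * p r
             = 2 * deriv p r * cot r - 6 / (sin r)\<^sup>2 * (p r - q r)"
  shows "\<exists>c1 c2 :: real. \<forall>r\<in>{0..pi}.
           p r = c1 * cos r + c2 * (sin r - r * cos r) \<and>
           q r = c1 * cos r + c2 * (sin r - r * cos r)"
proof -
  obtain p1 p2 where cp: "continuous_on {0..pi} p"
    and dp: "\<And>r. r \<in> {0<..<pi} \<Longrightarrow> (p has_real_derivative p1 r) (at r)"
    and dp1: "\<And>r. r \<in> {0<..<pi} \<Longrightarrow> (p1 has_real_derivative p2 r) (at r)"
    and ep1: "\<And>r. r \<in> {0<..<pi} \<Longrightarrow> deriv p r = p1 r"
    and ep2: "\<And>r. r \<in> {0<..<pi} \<Longrightarrow> deriv (deriv p) r = p2 r"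
    using smooth_facts[OF sp] by blast
  obtain q1 q2 where cq: "continuous_on {0..pi} q"
    and dq: "\<And>r. r \<in> {0<..<pi} \<Longrightarrow> (q has_real_derivative q1 r) (at r)"
    and dq1: "\<And>r. r \<in> {0<..<pi} \<Longrightarrow> (q1 has_real_derivative q2 r) (at r)"
    and eq1: "\<And>r. r \<in> {0<..<pi} \<Longrightarrow> deriv q r = q1 r"
    and eq2: "\<And>r. r \<in> {0<..<pi} \<Longrightarrow> deriv (deriv q) r = q2 r"
    using smooth_facts[OF sq] by blast
  have sn: "sin r \<noteq> 0" if "r \<in> {0<..<pi}" for r
    using that sin_gt_zero by fastforce
  have SC: "(sin r)^2 + (cos r)^2 = 1" for r :: real by simp
  have P2: "p2 r = q r + (p1 r + q1 r) * (cos r / sin r) + 3 / (sin r)^2 * (p r - q r)"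
    if r: "r \<in> {0<..<pi}" for r
  proof -
    have O1: "deriv (deriv p) r - q r = (deriv p r + deriv q r) * cot r + 3 / (sin r)\<^sup>2 * (p r - q r)"
      using ode r by blast
    hence "p2 r - q r = (p1 r + q1 r) * cot r + 3 / (sin r)\<^sup>2 * (p r - q r)"
      by (simp only: ep1[OF r] ep2[OF r] eq1[OF r])
    then show ?thesis unfolding cot_def by linarith
  qed
  have Q2: "q2 r = 2 * p r - q r + 2 * p1 r * (cos r / sin r) - 6 / (sin r)^2 * (p r - q r)"
    if r: "r \<in> {0<..<pi}" for r
  proof -
    have O2: "deriv (deriv q) r + q r - 2 * p r = 2 * deriv p r * cot r - 6 / (sin r)\<^sup>2 * (p r - q r)"
      using ode r by blast
    hence "q2 r + q r - 2 * p r = 2 * p1 r * cot r - 6 / (sin r)\<^sup>2 * (p r - q r)"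
      by (simp only: ep1[OF r] eq2[OF r])
    then show ?thesis unfolding cot_def by linarith
  qed
  define v where "v r = (p r - q r) * sin r ^ 3" for r
  define v1 where "v1 r = (p1 r - q1 r) * sin r ^ 3 + 3 * (p r - q r) * sin r ^ 2 * cos r" for r
  define v2 where "v2 r = (p2 r - q2 r) * sin r ^ 3 + 6 * (p1 r - q1 r) * sin r ^ 2 * cos r
      + (p r - q r) * (6 * sin r * cos r ^ 2 - 3 * sin r ^ 3)" for r
  define y1 where "y1 r = (1 - cos r)^3 * (3 + cos r)" for r :: real
  define y11 where "y11 r = 4 * sin r * (1 - cos r)^2 * (2 + cos r)" for r :: real
  define y12 where "y12 r = 4 * cos r * (1 - cos r)^2 * (2 + cos r) + 12 * (sin r)^2 * (1 - cos r) * (1 + cos r)" for r :: real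
  define y2 where "y2 r = (1 + cos r)^3 * (3 - cos r)" for r :: real
  define y21 where "y21 r = - 4 * sin r * (1 + cos r)^2 * (2 - cos r)" for r :: real
  define y22 where "y22 r = - 4 * cos r * (1 + cos r)^2 * (2 - cos r) + 12 * (sin r)^2 * (1 + cos r) * (1 - cos r)" for r :: real
  have "\<exists>\<alpha> \<beta>. \<forall>r\<in>{0<..<pi}. v r = \<alpha> * y1 r + \<beta> * y2 r"
  proof (rule wronsk[where wd = v1 and wdd = v2 and yad = y11 and yadd = y12 and ybd = y21 and ybdd = y22
        and P = "\<lambda>r. 5 * cos r / sin r" and Q = "\<lambda>r. 4" and E = "\<lambda>r. 1 / sin r ^ 5" and K = "-48"])
    fix r :: real assume r: "r \<in> {0<..<pi}"
    show "(v has_real_derivative v1 r) (at r)"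
      unfolding v_def v1_def
      by (auto intro!: derivative_eq_intros dp[OF r] dq[OF r] simp: algebra_simps power2_eq_square power3_eq_cube)
    show "(v1 has_real_derivative v2 r) (at r)"
      unfolding v1_def[abs_def] v2_def
      by (auto intro!: derivative_eq_intros dp[OF r] dq[OF r] dp1[OF r] dq1[OF r] simp: algebra_simps power2_eq_square power3_eq_cube)
    show "v2 r = 5 * cos r / sin r * v1 r + 4 * v r"
      unfolding v2_def v1_def v_def P2[OF r] Q2[OF r]
      using v_ode_alg[OF sn[OF r] SC, of "q r" "p1 r" "q1 r" "p r"]
      by (simp add: algebra_simps)
    show "(y1 has_real_derivative y11 r) (at r)"
      unfolding y1_def[abs_def] y11_def
      by (auto intro!: derivative_eq_intros simp: algebra_simps power2_eq_square power3_eq_cube)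
    show "(y11 has_real_derivative y12 r) (at r)"
      unfolding y11_def[abs_def] y12_def
      by (auto intro!: derivative_eq_intros simp: algebra_simps power2_eq_square power3_eq_cube)
    show "y12 r = 5 * cos r / sin r * y11 r + 4 * y1 r"
      unfolding y12_def y11_def y1_def using y1_alg[OF sn[OF r] SC] by simp
    show "(y2 has_real_derivative y21 r) (at r)"
      unfolding y2_def[abs_def] y21_def
      by (auto intro!: derivative_eq_intros simp: algebra_simps power2_eq_square power3_eq_cube)
    show "(y21 has_real_derivative y22 r) (at r)"
      unfolding y21_def[abs_def] y22_def
      by (auto intro!: derivative_eq_intros simp: algebra_simps power2_eq_square power3_eq_cube)
    show "y22 r = 5 * cos r / sin r * y21 r + 4 * y2 r"
      unfolding y22_def y21_def y2_def using y2_alg[OF sn[OF r] SC] by simp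
    show "((\<lambda>r. 1 / sin r ^ 5) has_real_derivative - (5 * cos r / sin r) * (1 / sin r ^ 5)) (at r)"
      using sn[OF r] by (auto intro!: derivative_eq_intros simp: field_simps eval_nat_numeral)
    show "(y1 r * y21 r - y11 r * y2 r) * (1 / sin r ^ 5) = -48"
      unfolding y1_def y21_def y11_def y2_def using K_alg[OF sn[OF r] SC] by simp
  qed simp
  then obtain \<alpha> \<beta> where ab: "\<forall>r\<in>{0<..<pi}. v r = \<alpha> * y1 r + \<beta> * y2 r" by blast
  have cv: "continuous_on {0..pi} v" unfolding v_def[abs_def]
    by (intro continuous_intros cp cq)
  have cy: "continuous_on {0..pi} (\<lambda>r. \<alpha> * y1 r + \<beta> * y2 r)" unfolding y1_def y2_def
    by (intro continuous_intros)
  have at0: "v 0 = \<alpha> * y1 0 + \<beta> * y2 0"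
    by (rule agree_closure[OF cv cy]) (use ab pi_gt_zero in auto)
  have atpi: "v pi = \<alpha> * y1 pi + \<beta> * y2 pi"
    by (rule agree_closure[OF cv cy]) (use ab pi_gt_zero in auto)
  have b0: "\<beta> = 0" using at0 by (simp add: v_def y1_def y2_def)
  have a0: "\<alpha> = 0" using atpi by (simp add: v_def y1_def y2_def)
  have pq: "p r = q r" if r: "r \<in> {0<..<pi}" for r
  proof -
    have "v r = 0" using ab r a0 b0 by simp
    then show ?thesis using sn[OF r] by (simp add: v_def)
  qed
  have p1q1: "p1 r = q1 r" if r: "r \<in> {0<..<pi}" for r
  proof -
    have "(p has_real_derivative q1 r) (at r)"
      by (rule has_field_derivative_transform_within_open[OF dq[OF r] open_greaterThanLessThan r]) (use pq in auto)
    then show ?thesis using dp[OF r] DERIV_unique by blast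
  qed
  have "\<exists>\<alpha> \<beta>. \<forall>r\<in>{0<..<pi}. p r = \<alpha> * cos r + \<beta> * (sin r - r * cos r)"
  proof (rule wronsk[where wd = p1 and wdd = p2 and yad = "\<lambda>r. - sin r" and yadd = "\<lambda>r. - cos r"
        and ybd = "\<lambda>r. r * sin r" and ybdd = "\<lambda>r. sin r + r * cos r"
        and P = "\<lambda>r. 2 * cos r / sin r" and Q = "\<lambda>r. 1" and E = "\<lambda>r. 1 / (sin r)^2" and K = 1])
    fix r :: real assume r: "r \<in> {0<..<pi}"
    show "(p has_real_derivative p1 r) (at r)" by (rule dp[OF r])
    show "(p1 has_real_derivative p2 r) (at r)" by (rule dp1[OF r])
    show "p2 r = 2 * cos r / sin r * p1 r + 1 * p r"
      unfolding P2[OF r] using pq[OF r] p1q1[OF r] by (simp add: algebra_simps)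
    show "(cos has_real_derivative - sin r) (at r)" by (auto intro!: derivative_eq_intros)
    show "((\<lambda>r. - sin r) has_real_derivative - cos r) (at r)" by (auto intro!: derivative_eq_intros)
    show "- cos r = 2 * cos r / sin r * - sin r + 1 * cos r" using sn[OF r] by simp
    show "((\<lambda>r. sin r - r * cos r) has_real_derivative r * sin r) (at r)"
      by (auto intro!: derivative_eq_intros simp: algebra_simps)
    show "((\<lambda>r. r * sin r) has_real_derivative sin r + r * cos r) (at r)"
      by (auto intro!: derivative_eq_intros simp: algebra_simps)
    show "sin r + r * cos r = 2 * cos r / sin r * (r * sin r) + 1 * (sin r - r * cos r)"
      using sn[OF r] by (simp add: field_simps)
    show "((\<lambda>r. 1 / (sin r)^2) has_real_derivative - (2 * cos r / sin r) * (1 / (sin r)^2)) (at r)"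
      using sn[OF r] by (auto intro!: derivative_eq_intros simp: field_simps power2_eq_square power3_eq_cube)
    show "(cos r * (r * sin r) - - sin r * (sin r - r * cos r)) * (1 / (sin r)^2) = 1"
      using sn[OF r] by (simp add: field_simps power2_eq_square)
  qed simp
  then obtain c1 c2 where cc: "\<forall>r\<in>{0<..<pi}. p r = c1 * cos r + c2 * (sin r - r * cos r)" by blast
  have ch: "continuous_on {0..pi} (\<lambda>r. c1 * cos r + c2 * (sin r - r * cos r))"
    by (intro continuous_intros)
  show ?thesis
  proof (intro exI ballI conjI)
    fix r assume r: "r \<in> {0..pi}"
    show "p r = c1 * cos r + c2 * (sin r - r * cos r)"
      by (rule agree_closure[OF cp ch _ r]) (use cc in auto)
    show "q r = c1 * cos r + c2 * (sin r - r * cos r)"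
      by (rule agree_closure[OF cq ch _ r]) (use cc pq in auto)
  qed
qed


lemma part1_bwd:
  fixes p q :: "real \<Rightarrow> real" and c1 c2 :: real
  assumes pq: "\<forall>r\<in>{0..pi}. p r = c1 * cos r + c2 * (sin r - r * cos r) \<and>
                             q r = c1 * cos r + c2 * (sin r - r * cos r)"
  shows "\<forall>r\<in>{0<..<pi}.
           deriv (deriv p) r - q r
             = (deriv p r + deriv q r) * cot r + 3 / (sin r)\<^sup>2 * (p r - q r) \<and>
           deriv (deriv q) r + q r - 2 * p r
             = 2 * deriv p r * cot r - 6 / (sin r)\<^sup>2 * (p r - q r)"
proof
  fix r :: real assume r: "r \<in> {0<..<pi}"
  define h where "h t = c1 * cos t + c2 * (sin t - t * cos t)" for t :: real
  define h1 where "h1 t = - c1 * sin t + c2 * (t * sin t)" for t :: real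
  define h2 where "h2 t = - c1 * cos t + c2 * (sin t + t * cos t)" for t :: real
  have dh: "(h has_real_derivative h1 t) (at t)" for t
    unfolding h_def[abs_def] h1_def by (auto intro!: derivative_eq_intros simp: algebra_simps)
  have dh1: "(h1 has_real_derivative h2 t) (at t)" for t
    unfolding h1_def[abs_def] h2_def by (auto intro!: derivative_eq_intros simp: algebra_simps)
  have D: "deriv f r = h1 r \<and> deriv (deriv f) r = h2 r" if f: "\<forall>t\<in>{0<..<pi}. f t = h t" for f
  proof -
    have df: "(f has_real_derivative h1 t) (at t)" if t: "t \<in> {0<..<pi}" for t
      by (rule has_field_derivative_transform_within_open[OF dh open_greaterThanLessThan t]) (use f in auto)
    have d1: "deriv f t = h1 t" if t: "t \<in> {0<..<pi}" for t using df[OF t] by (rule DERIV_imp_deriv)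
    have "(deriv f has_real_derivative h2 r) (at r)"
      by (rule has_field_derivative_transform_within_open[OF dh1 open_greaterThanLessThan r]) (use d1 in auto)
    then show ?thesis using d1[OF r] DERIV_imp_deriv by blast
  qed
  have fp: "\<forall>t\<in>{0<..<pi}. p t = h t" and fq: "\<forall>t\<in>{0<..<pi}. q t = h t"
    using pq unfolding h_def by auto
  have pr: "p r = h r" and qr: "q r = h r" using fp fq r by auto
  have sn: "sin r \<noteq> 0" using r sin_gt_zero by fastforce
  have e: "h2 r - h r = 2 * h1 r * (cos r / sin r)"
    unfolding h2_def h_def h1_def using sn by (simp add: field_simps)
  show "deriv (deriv p) r - q r
             = (deriv p r + deriv q r) * cot r + 3 / (sin r)\<^sup>2 * (p r - q r) \<and>
           deriv (deriv q) r + q r - 2 * p r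
             = 2 * deriv p r * cot r - 6 / (sin r)\<^sup>2 * (p r - q r)"
    using D[OF fp] D[OF fq] pr qr e unfolding cot_def by (simp add: algebra_simps)
qed

theorem mainTheorem2:
  shows
   "(\<forall>p q :: real \<Rightarrow> real.
       smooth_on_closed 0 pi p \<and> smooth_on_closed 0 pi q \<longrightarrow>
       ((\<forall>r\<in>{0<..<pi}.
           deriv (deriv p) r - q r
             = (deriv p r + deriv q r) * cot r + 3 / (sin r)\<^sup>2 * (p r - q r) \<and>
           deriv (deriv q) r + q r - 2 * p r
             = 2 * deriv p r * cot r - 6 / (sin r)\<^sup>2 * (p r - q r))
        \<longleftrightarrow>
        (\<exists>c1 c2 :: real. \<forall>r\<in>{0..pi}.
           p r = c1 * cos r + c2 * (sin r - r * cos r) \<and>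
           q r = c1 * cos r + c2 * (sin r - r * cos r))))
    \<and>
    (\<forall>c1 c2 :: real. \<forall>x :: nat \<Rightarrow> real. \<forall>a<4. \<forall>b<4. \<forall>c<4. \<forall>d<4.
       0 < x 0 \<and> x 0 < pi \<and> 0 < x 1 \<and> x 1 < pi \<longrightarrow>
       (\<lambda>\<epsilon>::real.
          frame_riemann
            (s4_metric (\<lambda>r. sin r + \<epsilon> * (c1 * cos r + c2 * (sin r - r * cos r)))
                       (\<lambda>r. sin r + \<epsilon> * (c1 * cos r + c2 * (sin r - r * cos r))))
            (s4_frame (\<lambda>r. sin r + \<epsilon> * (c1 * cos r + c2 * (sin r - r * cos r)))
                      (\<lambda>r. sin r + \<epsilon> * (c1 * cos r + c2 * (sin r - r * cos r))))
            x a b c d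
          - (1 - 2 * \<epsilon> * c2) *
              ((if a = c then 1 else 0) * (if b = d then 1 else 0)
               - (if a = d then 1 else 0) * (if b = c then 1 else 0)))
       \<in> O[at 0](\<lambda>\<epsilon>. \<epsilon>\<^sup>2))"
proof (intro conjI allI impI)
  fix p q :: "real \<Rightarrow> real"
  assume s: "smooth_on_closed 0 pi p \<and> smooth_on_closed 0 pi q"
  show "(\<forall>r\<in>{0<..<pi}.
           deriv (deriv p) r - q r
             = (deriv p r + deriv q r) * cot r + 3 / (sin r)\<^sup>2 * (p r - q r) \<and>
           deriv (deriv q) r + q r - 2 * p r
             = 2 * deriv p r * cot r - 6 / (sin r)\<^sup>2 * (p r - q r))
        \<longleftrightarrow>
        (\<exists>c1 c2 :: real. \<forall>r\<in>{0..pi}.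
           p r = c1 * cos r + c2 * (sin r - r * cos r) \<and>
           q r = c1 * cos r + c2 * (sin r - r * cos r))"
  proof
    assume "\<forall>r\<in>{0<..<pi}.
           deriv (deriv p) r - q r
             = (deriv p r + deriv q r) * cot r + 3 / (sin r)\<^sup>2 * (p r - q r) \<and>
           deriv (deriv q) r + q r - 2 * p r
             = 2 * deriv p r * cot r - 6 / (sin r)\<^sup>2 * (p r - q r)"
    then show "\<exists>c1 c2 :: real. \<forall>r\<in>{0..pi}.
           p r = c1 * cos r + c2 * (sin r - r * cos r) \<and>
           q r = c1 * cos r + c2 * (sin r - r * cos r)"
      using part1_fwd s by blast
  next
    assume "\<exists>c1 c2 :: real. \<forall>r\<in>{0..pi}.
           p r = c1 * cos r + c2 * (sin r - r * cos r) \<and>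
           q r = c1 * cos r + c2 * (sin r - r * cos r)"
    then obtain c1 c2 where "\<forall>r\<in>{0..pi}.
           p r = c1 * cos r + c2 * (sin r - r * cos r) \<and>
           q r = c1 * cos r + c2 * (sin r - r * cos r)" by blast
    then show "\<forall>r\<in>{0<..<pi}.
           deriv (deriv p) r - q r
             = (deriv p r + deriv q r) * cot r + 3 / (sin r)\<^sup>2 * (p r - q r) \<and>
           deriv (deriv q) r + q r - 2 * p r
             = 2 * deriv p r * cot r - 6 / (sin r)\<^sup>2 * (p r - q r)"
      by (rule part1_bwd)
  qed
next
  fix c1 c2 :: real and x :: "nat \<Rightarrow> real" and a b c d :: nat
  assume "a < 4" "b < 4" "c < 4" "d < 4" "0 < x 0 \<and> x 0 < pi \<and> 0 < x 1 \<and> x 1 < pi"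
  then show "(\<lambda>\<epsilon>::real.
          frame_riemann
            (s4_metric (\<lambda>r. sin r + \<epsilon> * (c1 * cos r + c2 * (sin r - r * cos r)))
                       (\<lambda>r. sin r + \<epsilon> * (c1 * cos r + c2 * (sin r - r * cos r))))
            (s4_frame (\<lambda>r. sin r + \<epsilon> * (c1 * cos r + c2 * (sin r - r * cos r)))
                      (\<lambda>r. sin r + \<epsilon> * (c1 * cos r + c2 * (sin r - r * cos r))))
            x a b c d
          - (1 - 2 * \<epsilon> * c2) *
              ((if a = c then 1 else 0) * (if b = d then 1 else 0)
               - (if a = d then 1 else 0) * (if b = c then 1 else 0)))
       \<in> O[at 0](\<lambda>\<epsilon>. \<epsilon>\<^sup>2)"
    using curv_part by blast
qed

end
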